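(* Let $q\ge 4$. If five distinct points of $\mathcal O_1$ are contained in a solid $\Sigma$ of $\mathrm{PG}(U_1)$, then they lie in a twisted cubic of $\mathcal O_1$ (i.e. in $\theta(L)$ for some $q$-order subline $L$ of $\mathrm{PG}(1,q^3)$), and this twisted cubic equals $\Sigma\cap\mathcal O_1$.
   Context: $q$ is a prime power. Let $U_1\subset\mathbb F_{q^3}^8$ be the set of vectors $(a,b^{q^2},b^{q},c,b,c^{q},c^{q^2},d)$ with $a,d\in\mathbb F_q$, $b,c\in\mathbb F_{q^3}$; it is an $8$-dimensional $\mathbb F_q$-vector space, so $\mathrm{PG}(U_1)\cong\mathrm{PG}(7,q)$. For $(a,b,c,d)\ne 0$ let $P(a,b,c,d)$ be the point of $\mathrm{PG}(U_1)$ spanned by this vector. Let $\mathcal O_1=\{P(1,t,t^{q^2+q},t^{q^2+q+1}) : t\in\mathbb F_{q^3}\}\cup\{P(0,0,0,1)\}$ (a set of $q^3+1$ points; note $P(1,t,t^{q^2+q},t^{q^2+q+1})$ is the vector $(1,t)\otimes(1,t^q)\otimes(1,t^{q^2})$). Let $\theta:\mathrm{PG}(1,q^3)\to\mathcal O_1$ be the bijection $\langle(1,t)\rangle\mapsto P(1,t,t^{q^2+q},t^{q^2+q+1})$, $\langle(0,1)\rangle\mapsto P(0,0,0,1)$. A $q$-order subline of $\mathrm{PG}(1,q^3)$ is the image of $\mathrm{PG}(1,q)=\{\langle(1,t)\rangle:t\in\mathbb F_q\}\cup\{\langle(0,1)\rangle\}$ under an element of $\mathrm{PGL}(2,q^3)$.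 For every $q$-order subline $L$, $\theta(L)$ is a twisted cubic of $\mathrm{PG}(U_1)$ spanning a solid (e.g. $\theta(\mathrm{PG}(1,q))=\{P(1,t,t^2,t^3):t\in\mathbb F_q\}\cup\{P(0,0,0,1)\}$); these are called the twisted cubics of $\mathcal O_1$. A solid is a $3$-dimensional projective subspace. *)

theory Defs
  imports "HOL-Computational_Algebra.Primes"
begin

text \<open>The field F_{q^3} is a finite field type 'a with CARD('a) = q^3; its subfield
F_q is the fixed field of x \<mapsto> x^q.\<close>

definition Fq :: "nat \<Rightarrow> ('a::field) set" where
  "Fq q = {x. x ^ q = x}"

definition U1vec :: "nat \<Rightarrow> 'a::field \<Rightarrow> 'a \<Rightarrow> 'a \<Rightarrow> 'a \<Rightarrow> (nat \<Rightarrow> 'a)" where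
  "U1vec q a b c d = (\<lambda>i. if i < 8 then
      [a, b ^ (q^2), b ^ q, c, b, c ^ q, c ^ (q^2), d] ! i else 0)"

definition U1 :: "nat \<Rightarrow> (nat \<Rightarrow> 'a::field) set" where
  "U1 q = {U1vec q a b c d | a b c d. a \<in> Fq q \<and> d \<in> Fq q}"

definition fq_span :: "nat \<Rightarrow> (nat \<Rightarrow> 'a::field) set \<Rightarrow> (nat \<Rightarrow> 'a) set" where
  "fq_span q S = {(\<lambda>i. \<Sum>v\<in>T. c v * v i) | T c. finite T \<and> T \<subseteq> S \<and> (\<forall>v\<in>T. c v \<in> Fq q)}"

definition fq_indep :: "nat \<Rightarrow> (nat \<Rightarrow> 'a::field) set \<Rightarrow> bool" where
  "fq_indep q S \<longleftrightarrow> finite S \<and> (\<forall>c. (\<forall>v\<in>S. c v \<in> Fq q) \<and> (\<forall>i. (\<Sum>v\<in>S. c v * v i) = 0)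
        \<longrightarrow> (\<forall>v\<in>S. c v = 0))"

text \<open>A solid of PG(U_1): a 4-dimensional F_q-subspace of U_1 (as a set of vectors).\<close>
definition is_solid :: "nat \<Rightarrow> (nat \<Rightarrow> 'a::field) set \<Rightarrow> bool" where
  "is_solid q \<Sigma> \<longleftrightarrow> (\<exists>S. S \<subseteq> U1 q \<and> card S = 4 \<and> fq_indep q S \<and> \<Sigma> = fq_span q S)"

text \<open>A point of PG(U_1) is a 1-dimensional F_q-subspace; P(a,b,c,d) is the span of the vector.\<close>
definition Ppt :: "nat \<Rightarrow> 'a::field \<Rightarrow> 'a \<Rightarrow> 'a \<Rightarrow> 'a \<Rightarrow> (nat \<Rightarrow> 'a) set" where
  "Ppt q a b c d = fq_span q {U1vec q a b c d}"

text \<open>theta applied to a representative (x,y) \<noteq> (0,0) of a point of PG(1,q^3).\<close>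
definition theta :: "nat \<Rightarrow> 'a::field \<times> 'a \<Rightarrow> (nat \<Rightarrow> 'a) set" where
  "theta q p = (let (x, y) = p in
     if x = 0 then Ppt q 0 0 0 1
     else (let t = y / x in Ppt q 1 t (t ^ (q^2 + q)) (t ^ (q^2 + q + 1))))"

definition O1 :: "nat \<Rightarrow> ((nat \<Rightarrow> 'a::field) set) set" where
  "O1 q = {Ppt q 1 t (t ^ (q^2 + q)) (t ^ (q^2 + q + 1)) | t. True} \<union> {Ppt q 0 0 0 1}"

text \<open>theta(L) for L the image of PG(1,q) under the element of PGL(2,q^3) given by the
invertible matrix ((alpha,beta),(gamma,delta)) acting on (x,y).\<close>
definition twisted_cubic_O1 :: "nat \<Rightarrow> ((nat \<Rightarrow> 'a::field) set) set \<Rightarrow> bool" where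
  "twisted_cubic_O1 q C \<longleftrightarrow> (\<exists>\<alpha> \<beta> \<gamma> \<delta>. \<alpha> * \<delta> - \<beta> * \<gamma> \<noteq> 0 \<and>
      C = {theta q (\<alpha> + \<beta> * t, \<gamma> + \<delta> * t) | t. t \<in> Fq q} \<union> {theta q (\<beta>, \<delta>)})"

end

theory Submission
  imports Defs "HOL-Number_Theory.Residues"
begin

lemma power_card_same:
  fixes x :: "'a :: {field,finite}"
  shows   "x ^ card (UNIV :: 'a set) = x"
proof (cases "x = 0")
  case False
  have "x * (\<Prod>y\<in>UNIV-{0}. x * y) = x * x ^ (card (UNIV :: 'a set) - 1) * \<Prod>(UNIV-{0})"
    by (simp add: prod.distrib mult_ac)
  also have "x * x ^ (card (UNIV :: 'a set) - 1) = x ^ Suc (card (UNIV :: 'a set) - 1)"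
    by (subst power_Suc) auto
  also have "Suc (card (UNIV :: 'a set) - 1) = card (UNIV :: 'a set)"
    using finite_UNIV_card_ge_0[where ?'a = 'a] by simp
  also have "(\<Prod>y\<in>UNIV-{0}. x * y) = (\<Prod>y\<in>UNIV-{0}. y)"
    by (rule prod.reindex_bij_witness[of _ "\<lambda>y. y / x" "\<lambda>y. x * y"]) (use False in auto)
  finally show ?thesis
    by simp
qed (use finite_UNIV_card_ge_0[where ?'a = 'a] in auto)

lemma frob_facts:
  fixes q :: nat
  assumes "\<exists>p k. prime p \<and> k > 0 \<and> q = p ^ k"
    and "card (UNIV :: 'a::{field,finite} set) = q ^ 3"
  shows "\<forall>x y :: 'a. (x + y) ^ q = x ^ q + y ^ q" "\<forall>x :: 'a. x ^ (q ^ 3) = x" "q > 1"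
proof -
  obtain p k where pk: "prime p" "k > 0" "q = p ^ k" using assms(1) by blast
  have fin: "finite (UNIV :: 'a set)" by simp
  have cp: "CHAR('a) > 0" using finite_imp_CHAR_pos[OF fin] .
  have pc: "prime CHAR('a)" using prime_CHAR_semidom[OF cp] .
  have "CHAR('a) dvd p ^ (k * 3)" using CHAR_dvd_CARD[where 'a='a] assms(2) pk
    by (simp add: power_mult)
  hence "CHAR('a) dvd p" using pc prime_dvd_power by blast
  hence cpe: "CHAR('a) = p" using pc pk(1) by (simp add: primes_dvd_imp_eq)
  show "\<forall>x y :: 'a. (x + y) ^ q = x ^ q + y ^ q"
    using freshmans_dream'[OF pc, of q k] cpe pk by auto
  show "\<forall>x :: 'a. x ^ (q ^ 3) = x" using power_card_same assms(2) by metis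
  show "q > 1" using pk prime_gt_1_nat[OF pk(1)] by (metis one_less_power)
qed

locale FF =
  fixes q :: nat and ty :: "'a::{field,finite} itself"
  assumes fadd: "\<And>x y :: 'a. (x + y) ^ q = x ^ q + y ^ q"
    and fcube: "\<And>x :: 'a. x ^ (q ^ 3) = x"
    and qgt: "q > 1"
begin

definition F :: "'a \<Rightarrow> 'a" where "F x = x ^ q"

lemma F_add[simp]: "F (x + y) = F x + F y" by (simp add: F_def fadd)
lemma F_mult[simp]: "F (x * y) = F x * F y" by (simp add: F_def power_mult_distrib)
lemma F_0[simp]: "F 0 = 0" using qgt by (simp add: F_def)
lemma F_1[simp]: "F 1 = 1" by (simp add: F_def)
lemma F_uminus[simp]: "F (- x) = - F x"
proof -
  have "F x + F (- x) = 0" by (metis F_add F_0 add.right_inverse)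
  thus ?thesis by (simp add: add_eq_0_iff)
qed
lemma F_diff[simp]: "F (x - y) = F x - F y"
  using F_add[of x "- y"] by simp
lemma F_inverse[simp]: "F (inverse x) = inverse (F x)" by (simp add: F_def power_inverse)
lemma F_divide[simp]: "F (x / y) = F x / F y" by (simp add: F_def power_divide)
lemma F_FFF[simp]: "F (F (F x)) = x"
proof -
  have "F (F (F x)) = x ^ (q ^ 3)" by (simp add: F_def power_mult[symmetric] power3_eq_cube mult.assoc)
  thus ?thesis using fcube by simp
qed
lemma F_eq0[simp]: "F x = 0 \<longleftrightarrow> x = 0" using qgt by (simp add: F_def)
lemma F_numeral[simp]: "F (numeral n) = numeral n"
  by (induction n) (simp_all only: numeral.simps F_add F_1)
lemma F_sum: "F (\<Sum>x\<in>T. f x) = (\<Sum>x\<in>T. F (f x))"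
  by (induction T rule: infinite_finite_induct) auto
lemma F_inj: "F x = F y \<longleftrightarrow> x = y"
  by (metis F_FFF)

lemma pow_q2: "x ^ (q^2) = F (F x)" by (simp add: F_def power2_eq_square power_mult)
lemma pow_q: "x ^ q = F x" by (simp add: F_def)
lemma pow_c: "x ^ (q^2 + q) = F (F x) * F x" by (simp add: power_add pow_q2 F_def)
lemma pow_n: "x ^ (q^2 + q + 1) = F (F x) * F x * x" by (simp add: power_add pow_q2 F_def)

abbreviation Fqa :: "'a set" where "Fqa \<equiv> Fq q"

lemma Fq_iff: "x \<in> Fqa \<longleftrightarrow> F x = x" by (simp add: Fq_def F_def)

lemma U1vec_eq: "U1vec q a b c d = (\<lambda>i. if i < 8 then [a, F (F b), F b, c, b, F c, F (F c), d] ! i else 0)"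
  unfolding U1vec_def pow_q2 pow_q ..

lemma Fq_0[simp]: "0 \<in> Fqa" by (simp add: Fq_iff)
lemma Fq_1[simp]: "1 \<in> Fqa" by (simp add: Fq_iff)
lemma Fq_add[simp]: "x \<in> Fqa \<Longrightarrow> y \<in> Fqa \<Longrightarrow> x + y \<in> Fqa" by (simp add: Fq_iff)
lemma Fq_mult[simp]: "x \<in> Fqa \<Longrightarrow> y \<in> Fqa \<Longrightarrow> x * y \<in> Fqa" by (simp add: Fq_iff)
lemma Fq_diff[simp]: "x \<in> Fqa \<Longrightarrow> y \<in> Fqa \<Longrightarrow> x - y \<in> Fqa" by (simp add: Fq_iff)
lemma Fq_uminus[simp]: "x \<in> Fqa \<Longrightarrow> - x \<in> Fqa" by (simp add: Fq_iff)
lemma Fq_divide[simp]: "x \<in> Fqa \<Longrightarrow> y \<in> Fqa \<Longrightarrow> x / y \<in> Fqa" by (simp add: Fq_iff)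
lemma Fq_sum: "(\<And>x. x \<in> T \<Longrightarrow> f x \<in> Fqa) \<Longrightarrow> (\<Sum>x\<in>T. f x) \<in> Fqa"
  by (simp add: Fq_iff F_sum)

definition subsp :: "(nat \<Rightarrow> 'a) set \<Rightarrow> bool" where
  "subsp V \<longleftrightarrow> (\<forall>T c. finite T \<and> T \<subseteq> V \<and> (\<forall>v\<in>T. c v \<in> Fqa) \<longrightarrow> (\<lambda>i. \<Sum>v\<in>T. c v * v i) \<in> V)"

lemma span_finite_eq:
  fixes S :: "(nat \<Rightarrow> 'a) set"
  assumes "finite S"
  shows "fq_span q S = {(\<lambda>i. \<Sum>v\<in>S. c v * v i) | c. \<forall>v\<in>S. c v \<in> Fqa}"
proof
  show "fq_span q S \<subseteq> {(\<lambda>i. \<Sum>v\<in>S. c v * v i) | c. \<forall>v\<in>S. c v \<in> Fqa}"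
  proof
    fix w assume "w \<in> fq_span q S"
    then obtain T c where w: "w = (\<lambda>i. \<Sum>v\<in>T. c v * v i)" "finite T" "T \<subseteq> S" "\<forall>v\<in>T. c v \<in> Fqa"
      unfolding fq_span_def by blast
    define c' where "c' v = (if v \<in> T then c v else 0)" for v
    have "(\<lambda>i. \<Sum>v\<in>S. c' v * v i) = w"
    proof
      fix i
      have "(\<Sum>v\<in>S. c' v * v i) = (\<Sum>v\<in>S. if v \<in> T then c v * v i else 0)"
        by (rule sum.cong) (auto simp: c'_def)
      also have "\<dots> = (\<Sum>v\<in>S \<inter> T. c v * v i)"
        using assms by (simp add: sum.inter_restrict)
      also have "S \<inter> T = T" using w(3) by blast
      finally show "(\<Sum>v\<in>S. c' v * v i) = w i" using w(1) by simp
    qed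
    moreover have "\<forall>v\<in>S. c' v \<in> Fqa" using w(4) by (simp add: c'_def)
    ultimately show "w \<in> {(\<lambda>i. \<Sum>v\<in>S. c v * v i) | c. \<forall>v\<in>S. c v \<in> Fqa}" by blast
  qed
next
  show "{(\<lambda>i. \<Sum>v\<in>S. c v * v i) | c. \<forall>v\<in>S. c v \<in> Fqa} \<subseteq> fq_span q S"
    unfolding fq_span_def using assms by blast
qed

lemma span_subsp:
  fixes S :: "(nat \<Rightarrow> 'a) set"
  assumes "finite S"
  shows "subsp (fq_span q S)"
  unfolding subsp_def
proof (intro allI impI)
  fix T and d :: "(nat \<Rightarrow> 'a) \<Rightarrow> 'a"
  assume a: "finite T \<and> T \<subseteq> fq_span q S \<and> (\<forall>v\<in>T. d v \<in> Fqa)"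
  have "\<forall>w\<in>T. \<exists>c. (\<forall>v\<in>S. c v \<in> Fqa) \<and> w = (\<lambda>i. \<Sum>v\<in>S. c v * v i)"
  proof
    fix w assume "w \<in> T"
    hence "w \<in> fq_span q S" using a by blast
    thus "\<exists>c. (\<forall>v\<in>S. c v \<in> Fqa) \<and> w = (\<lambda>i. \<Sum>v\<in>S. c v * v i)"
      unfolding span_finite_eq[OF assms] by blast
  qed
  hence "\<exists>C. \<forall>w\<in>T. (\<forall>v\<in>S. C w v \<in> Fqa) \<and> w = (\<lambda>i. \<Sum>v\<in>S. C w v * v i)"
    by (rule bchoice)
  then obtain C where C0: "\<forall>w\<in>T. (\<forall>v\<in>S. C w v \<in> Fqa) \<and> w = (\<lambda>i. \<Sum>v\<in>S. C w v * v i)"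
    by (elim exE)
  have C: "\<And>w. w \<in> T \<Longrightarrow> (\<forall>v\<in>S. C w v \<in> Fqa) \<and> w = (\<lambda>i. \<Sum>v\<in>S. C w v * v i)"
    using C0 by (rule bspec)
  have "(\<lambda>i. \<Sum>w\<in>T. d w * w i) = (\<lambda>i. \<Sum>v\<in>S. (\<Sum>w\<in>T. d w * C w v) * v i)"
  proof
    fix i
    have "(\<Sum>w\<in>T. d w * w i) = (\<Sum>w\<in>T. d w * (\<Sum>v\<in>S. C w v * v i))"
    proof (rule sum.cong)
      fix w assume "w \<in> T"
      hence "w = (\<lambda>i. \<Sum>v\<in>S. C w v * v i)" by (rule conjunct2[OF C])
      hence "w i = (\<Sum>v\<in>S. C w v * v i)" by (rule fun_cong)
      thus "d w * w i = d w * (\<Sum>v\<in>S. C w v * v i)" by simp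
    qed simp
    also have "\<dots> = (\<Sum>w\<in>T. \<Sum>v\<in>S. d w * C w v * v i)"
      by (simp add: sum_distrib_left mult.assoc)
    also have "\<dots> = (\<Sum>v\<in>S. \<Sum>w\<in>T. d w * C w v * v i)"
      by (rule sum.swap)
    also have "\<dots> = (\<Sum>v\<in>S. (\<Sum>w\<in>T. d w * C w v) * v i)"
      by (simp add: sum_distrib_right)
    finally show "(\<Sum>w\<in>T. d w * w i) = (\<Sum>v\<in>S. (\<Sum>w\<in>T. d w * C w v) * v i)" .
  qed
  moreover have "\<forall>v\<in>S. (\<Sum>w\<in>T. d w * C w v) \<in> Fqa"
    using a C by (auto intro!: Fq_sum)
  ultimately show "(\<lambda>i. \<Sum>w\<in>T. d w * w i) \<in> fq_span q S"
    unfolding span_finite_eq[OF assms] by (intro CollectI exI[of _ "\<lambda>v. \<Sum>w\<in>T. d w * C w v"]) simp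
qed

lemma span_sub_subsp:
  assumes V: "subsp (V :: (nat \<Rightarrow> 'a) set)" and W: "W \<subseteq> V"
  shows "fq_span q W \<subseteq> V"
proof
  fix w assume "w \<in> fq_span q W"
  then obtain T c where w: "w = (\<lambda>i. \<Sum>v\<in>T. c v * v i)" "finite T" "T \<subseteq> W" "\<forall>v\<in>T. c v \<in> Fqa"
    unfolding fq_span_def by blast
  have "T \<subseteq> V" using w(3) W by blast
  thus "w \<in> V" using V w unfolding subsp_def by blast
qed

lemma span_as_image:
  fixes S :: "(nat \<Rightarrow> 'a) set"
  assumes "finite S"
  shows "fq_span q S = (\<lambda>c. (\<lambda>i. \<Sum>v\<in>S. c v * v i)) ` (PiE S (\<lambda>_. Fqa))"
proof -
  have "{(\<lambda>i. \<Sum>v\<in>S. c v * v i) | c. \<forall>v\<in>S. c v \<in> Fqa} = (\<lambda>c. (\<lambda>i. \<Sum>v\<in>S. c v * v i)) ` (PiE S (\<lambda>_. Fqa))"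
  proof
    show "{(\<lambda>i. \<Sum>v\<in>S. c v * v i) | c. \<forall>v\<in>S. c v \<in> Fqa} \<subseteq> (\<lambda>c. (\<lambda>i. \<Sum>v\<in>S. c v * v i)) ` (PiE S (\<lambda>_. Fqa))"
    proof
      fix w assume "w \<in> {(\<lambda>i. \<Sum>v\<in>S. c v * v i) | c. \<forall>v\<in>S. c v \<in> Fqa}"
      then obtain c where c: "w = (\<lambda>i. \<Sum>v\<in>S. c v * v i)" "\<forall>v\<in>S. c v \<in> Fqa" by blast
      have r: "restrict c S \<in> PiE S (\<lambda>_. Fqa)" using c(2) by (simp add: PiE_iff)
      have "w = (\<lambda>i. \<Sum>v\<in>S. restrict c S v * v i)" unfolding c(1) by (intro ext sum.cong) auto
      thus "w \<in> (\<lambda>c. (\<lambda>i. \<Sum>v\<in>S. c v * v i)) ` (PiE S (\<lambda>_. Fqa))" using r by (rule image_eqI)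
    qed
  next
    show "(\<lambda>c. (\<lambda>i. \<Sum>v\<in>S. c v * v i)) ` (PiE S (\<lambda>_. Fqa)) \<subseteq> {(\<lambda>i. \<Sum>v\<in>S. c v * v i) | c. \<forall>v\<in>S. c v \<in> Fqa}"
    proof
      fix w assume "w \<in> (\<lambda>c. (\<lambda>i. \<Sum>v\<in>S. c v * v i)) ` (PiE S (\<lambda>_. Fqa))"
      then obtain c where c: "c \<in> PiE S (\<lambda>_. Fqa)" "w = (\<lambda>i. \<Sum>v\<in>S. c v * v i)" by blast
      have "\<forall>v\<in>S. c v \<in> Fqa" using c(1) by (simp add: PiE_iff)
      thus "w \<in> {(\<lambda>i. \<Sum>v\<in>S. c v * v i) | c. \<forall>v\<in>S. c v \<in> Fqa}" using c(2) by blast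
    qed
  qed
  thus ?thesis using span_finite_eq[OF assms] by simp
qed

lemma finite_Fq: "finite Fqa" by (rule finite_subset[of _ UNIV]) auto

lemma card_span_le:
  fixes S :: "(nat \<Rightarrow> 'a) set"
  assumes "finite S"
  shows "finite (fq_span q S)" "card (fq_span q S) \<le> card (Fqa) ^ card S"
proof -
  have fp: "finite (PiE S (\<lambda>_. Fqa))" using assms finite_Fq by (simp add: finite_PiE)
  show "finite (fq_span q S)" using span_as_image[OF assms] fp by simp
  have "card (fq_span q S) = card ((\<lambda>c. (\<lambda>i. \<Sum>v\<in>S. c v * v i)) ` (PiE S (\<lambda>_. Fqa)))"
    using span_as_image[OF assms] by simp
  also have "\<dots> \<le> card (PiE S (\<lambda>_. Fqa))" by (rule card_image_le[OF fp])
  finally have "card (fq_span q S) \<le> card (PiE S (\<lambda>_. Fqa))" .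
  also have "\<dots> = card (Fqa) ^ card S" using assms by (simp add: card_PiE)
  finally show "card (fq_span q S) \<le> card (Fqa) ^ card S" .
qed

lemma card_span_indep:
  fixes W :: "(nat \<Rightarrow> 'a) set"
  assumes "fq_indep q W"
  shows "card (fq_span q W) = card (Fqa) ^ card W"
proof -
  have fin: "finite W" using assms unfolding fq_indep_def by blast
  have inj: "inj_on (\<lambda>c. (\<lambda>i. \<Sum>v\<in>W. c v * v i)) (PiE W (\<lambda>_. Fqa))"
  proof (rule inj_onI)
    fix c d assume c: "c \<in> PiE W (\<lambda>_. Fqa)" and d: "d \<in> PiE W (\<lambda>_. Fqa)"
      and eq: "(\<lambda>i. \<Sum>v\<in>W. c v * v i) = (\<lambda>i. \<Sum>v\<in>W. d v * v i)"
    have H0: "\<forall>c. (\<forall>v\<in>W. c v \<in> Fqa) \<and> (\<forall>i. (\<Sum>v\<in>W. c v * v i) = 0) \<longrightarrow> (\<forall>v\<in>W. c v = 0)"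
      using assms unfolding fq_indep_def by (rule conjunct2)
    have H1: "(\<forall>v\<in>W. c v - d v \<in> Fqa) \<and> (\<forall>i. (\<Sum>v\<in>W. (c v - d v) * v i) = 0) \<longrightarrow> (\<forall>v\<in>W. c v - d v = 0)"
      using spec[OF H0, of "\<lambda>v. c v - d v"] .
    have A1: "\<forall>i. (\<Sum>v\<in>W. (c v - d v) * v i) = 0"
    proof
      fix i
      have "(\<Sum>v\<in>W. c v * v i) = (\<Sum>v\<in>W. d v * v i)" using fun_cong[OF eq, of i] by simp
      thus "(\<Sum>v\<in>W. (c v - d v) * v i) = 0" by (simp add: left_diff_distrib sum_subtractf)
    qed
    have A2: "\<forall>v\<in>W. c v - d v \<in> Fqa" using c d by (auto simp: PiE_iff)
    have "\<forall>v\<in>W. c v - d v = 0" using H1 A1 A2 by blast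
    hence X: "\<forall>v\<in>W. c v = d v" by simp
    show "c = d" by (rule PiE_ext[OF c d]) (use X in blast)
  qed
  have "card (fq_span q W) = card (PiE W (\<lambda>_. Fqa))"
    using span_as_image[OF fin] card_image[OF inj] by simp
  also have "\<dots> = card (Fqa) ^ card W" using fin by (simp add: card_PiE)
  finally show ?thesis .
qed

lemma self_in_span: "(v :: nat \<Rightarrow> 'a) \<in> fq_span q {v}"
proof -
  have "(\<lambda>i. \<Sum>u\<in>{v}. (\<lambda>_. 1::'a) u * u i) \<in> fq_span q {v}"
    unfolding fq_span_def by (rule CollectI, rule exI[of _ "{v}"], rule exI[of _ "\<lambda>_. 1"]) simp
  thus ?thesis by simp
qed

lemma pt_sub:
  fixes V :: "(nat \<Rightarrow> 'a) set"
  assumes "subsp V"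
  shows "fq_span q {v} \<subseteq> V \<longleftrightarrow> v \<in> V"
proof
  assume "fq_span q {v} \<subseteq> V"
  thus "v \<in> V" using self_in_span[of v] by (rule subsetD)
next
  assume "v \<in> V" thus "fq_span q {v} \<subseteq> V" by (intro span_sub_subsp[OF assms]) simp
qed

lemma subsp_scale:
  assumes "subsp V" "v \<in> V" "(l::'a) \<in> Fqa"
  shows "(\<lambda>i. l * v i) \<in> V"
proof -
  have H: "\<forall>T c. finite T \<and> T \<subseteq> V \<and> (\<forall>v\<in>T. c v \<in> Fqa) \<longrightarrow> (\<lambda>i. \<Sum>v\<in>T. c v * v i) \<in> V"
    using assms(1) unfolding subsp_def .
  have "finite {v} \<and> {v} \<subseteq> V \<and> (\<forall>u\<in>{v}. (\<lambda>_. l) u \<in> Fqa) \<longrightarrow> (\<lambda>i. \<Sum>u\<in>{v}. (\<lambda>_. l) u * u i) \<in> V"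
    using spec[OF spec[OF H, of "{v}"], of "\<lambda>_. l"] .
  thus ?thesis using assms by simp
qed

end

definition mk8 :: "'a::zero list \<Rightarrow> nat \<Rightarrow> 'a" where
  "mk8 L = (\<lambda>i. if i < 8 then L ! i else 0)"

lemma mk8_eq: "length L = 8 \<Longrightarrow> length M = 8 \<Longrightarrow> mk8 L = mk8 M \<longleftrightarrow> L = M"
proof
  assume l: "length L = 8" "length M = 8" and e: "mk8 L = mk8 M"
  show "L = M"
  proof (rule nth_equalityI)
    fix i assume "i < length L"
    hence "i < 8" using l by simp
    thus "L ! i = M ! i" using fun_cong[OF e, of i] by (simp add: mk8_def)
  qed (use l in simp)
qed simp

lemma mk8_app: "i < 8 \<Longrightarrow> mk8 L i = L ! i" by (simp add: mk8_def)

lemma sum4: "distinct [w1,w2,w3,w4] \<Longrightarrow> sum g {w1,w2,w3,w4} = g w1 + g w2 + g w3 + g w4"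
  by (simp add: add.assoc)

context FF
begin

lemma U1vec_mk8: "U1vec q a b c d = mk8 [a, F (F b), F b, c, b, F c, F (F c), d]"
  by (simp add: U1vec_eq mk8_def)

definition vec :: "'a option \<Rightarrow> nat \<Rightarrow> 'a" where
  "vec x = (case x of None \<Rightarrow> U1vec q 0 0 0 1 | Some t \<Rightarrow> U1vec q 1 t (t^(q^2+q)) (t^(q^2+q+1)))"

lemma vec_None: "vec None = mk8 [0,0,0,0,0,0,0,1]"
  by (simp add: vec_def U1vec_mk8)

lemma vec_Some_U1: "vec (Some t) = U1vec q 1 t (F (F t) * F t) (F (F t) * F t * t)"
  by (simp add: vec_def pow_c pow_n mult_ac)

lemma vec_Some: "vec (Some t) = mk8 [1, F (F t), F t, F (F t) * F t, t, t * F (F t), F t * t, F (F t) * F t * t]"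
  by (simp add: vec_Some_U1 U1vec_mk8 mult.commute)

lemma U1vec_app: "U1vec q a b c d 0 = a" "U1vec q a b c d 4 = b" "U1vec q a b c d 3 = c" "U1vec q a b c d 7 = d"
  by (simp_all add: U1vec_def)

lemma U1vec_inj: "U1vec q a b c d = U1vec q a' b' c' d' \<longleftrightarrow> a = a' \<and> b = b' \<and> c = c' \<and> d = d'"
proof
  assume e: "U1vec q a b c d = U1vec q a' b' c' d'"
  show "a = a' \<and> b = b' \<and> c = c' \<and> d = d'"
    using fun_cong[OF e, of 0] fun_cong[OF e, of 4] fun_cong[OF e, of 3] fun_cong[OF e, of 7]
    by (simp add: U1vec_app)
qed simp

lemma quad_Fq:
  assumes e: "s * s + a1 * s + a0 = 0" and a: "a1 \<in> Fqa" "a0 \<in> Fqa"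
  shows "F s = s"
proof (rule ccontr)
  assume ne: "F s \<noteq> s"
  have fa: "F a1 = a1" "F a0 = a0" using a by (simp_all add: Fq_iff)
  have "F (s * s + a1 * s + a0) = 0" using e by simp
  hence e2: "F s * F s + a1 * F s + a0 = 0" using fa by simp
  have "(F s - s) * (F s + s + a1) = (F s * F s + a1 * F s + a0) - (s * s + a1 * s + a0)"
    by (simp add: algebra_simps)
  also have "\<dots> = 0" using e e2 by simp
  finally have z: "F s + s + a1 = 0" using ne by simp
  have "F s = (F s + s + a1) - s - a1" by (simp add: algebra_simps)
  hence fs: "F s = - s - a1" using z by simp
  hence "F (F s) = - F s - a1" using fa by simp
  hence "F (F s) = s" using fs by simp
  hence "F (F (F s)) = F s" by simp
  thus False using ne by simp
qed

lemma alg_main: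
  assumes cd: "c \<in> Fqa" "d \<in> Fqa" and u: "u = c + d * s"
    and e: "F (F u) * F u = c + d * (F (F s) * F s)"
    and ne: "s \<noteq> 0" "s \<noteq> 1" "u \<noteq> 0" "u \<noteq> 1" "u \<noteq> s"
  shows "F s = s"
proof (rule ccontr)
  assume nfs: "F s \<noteq> s"
  have fc: "F c = c" "F d = d" using cd by (simp_all add: Fq_iff)
  have fu: "F u = c + d * F s" "F (F u) = c + d * F (F s)" using u fc by simp_all
  have E: "(c + d * F (F s)) * (c + d * F s) = c + d * (F (F s) * F s)" using e fu by simp
  have fsnz: "F s \<noteq> 0" "F (F s) \<noteq> 0" using ne by simp_all
  show False
  proof (cases "d = 0")
    case True
    hence "c * c = c" using E by simp
    hence "c = 0 \<or> c = 1" by (metis mult_cancel_right1 mult_eq_0_iff)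
    thus False using u ne True by auto
  next
    case dnz: False
    show False
    proof (cases "c = 0")
      case True
      hence "(d * d) * (F (F s) * F s) = d * (F (F s) * F s)" using E by (simp add: algebra_simps)
      hence "d * d = d" using fsnz by simp
      hence "d = 1" using dnz by (metis mult_cancel_right1 mult_eq_0_iff)
      thus False using u ne True by auto
    next
      case cnz: False
      define \<sigma> where "\<sigma> = s + F s + F (F s)"
      define n where "n = s * F s * F (F s)"
      have sn: "\<sigma> \<in> Fqa" "n \<in> Fqa" unfolding \<sigma>_def n_def Fq_iff by (simp_all add: algebra_simps)
      have "c * d * (s * s) - ((c * c + c * d * \<sigma> - c) * s + (d * d - d) * n)
            = s * ((c + d * (F (F s) * F s)) - (c + d * F (F s)) * (c + d * F s))"
        unfolding \<sigma>_def n_def by (simp add: algebra_simps)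
      also have "\<dots> = 0" using E by simp
      finally have E2: "c * d * (s * s) = (c * c + c * d * \<sigma> - c) * s + (d * d - d) * n" by simp
      define a1 where "a1 = - (c * c + c * d * \<sigma> - c) / (c * d)"
      define a0 where "a0 = - (d * d - d) * n / (c * d)"
      have "s * s + a1 * s + a0 = (c * d * (s * s) - ((c * c + c * d * \<sigma> - c) * s + (d * d - d) * n)) / (c * d)"
        unfolding a1_def a0_def using cnz dnz by (simp add: field_simps)
      also have "\<dots> = 0" using E2 by simp
      finally have "s * s + a1 * s + a0 = 0" .
      moreover have "a1 \<in> Fqa" "a0 \<in> Fqa" unfolding a1_def a0_def using sn cd by simp_all
      ultimately have "F s = s" by (rule quad_Fq)
      thus False using nfs by simp
    qed
  qed
qed

end

lemma less8: "i < (8::nat) \<longleftrightarrow> i \<in> {0,1,2,3,4,5,6,7}" by auto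

context FF
begin

lemma vecN_app: "vec None 0 = 0" "vec None 4 = 0" "vec None 3 = 0" "vec None 7 = 1"
  by (simp_all add: vec_def U1vec_app)

lemma vecS_app: "vec (Some t) 0 = 1" "vec (Some t) 4 = t" "vec (Some t) 3 = F (F t) * F t"
  "vec (Some t) 7 = F (F t) * F t * t"
  by (simp_all add: vec_Some_U1 U1vec_app)

lemma vec_Some_Fq: "F t = t \<Longrightarrow> vec (Some t) = mk8 [1, t, t, t * t, t, t * t, t * t, t * t * t]"
  by (simp add: vec_Some)

lemma comb4:
  fixes w1 w2 w3 w4 :: "nat \<Rightarrow> 'a"
  assumes dist: "distinct [w1,w2,w3,w4]"
  shows "fq_span q {w1,w2,w3,w4} = {(\<lambda>i. a * w1 i + b * w2 i + c * w3 i + d * w4 i) | a b c d.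
           a \<in> Fqa \<and> b \<in> Fqa \<and> c \<in> Fqa \<and> d \<in> Fqa}"
proof -
  have fin: "finite {w1,w2,w3,w4}" by simp
  show ?thesis unfolding span_finite_eq[OF fin]
  proof (intro equalityI subsetI)
    fix x assume "x \<in> {(\<lambda>i. \<Sum>v\<in>{w1,w2,w3,w4}. c v * v i) | c. \<forall>v\<in>{w1,w2,w3,w4}. c v \<in> Fqa}"
    then obtain c where x: "x = (\<lambda>i. \<Sum>v\<in>{w1,w2,w3,w4}. c v * v i)" "\<forall>v\<in>{w1,w2,w3,w4}. c v \<in> Fqa"
      by blast
    have "x = (\<lambda>i. c w1 * w1 i + c w2 * w2 i + c w3 * w3 i + c w4 * w4 i)"
      unfolding x(1)
    proof (rule ext)
      fix i show "(\<Sum>v\<in>{w1,w2,w3,w4}. c v * v i) = c w1 * w1 i + c w2 * w2 i + c w3 * w3 i + c w4 * w4 i"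
        using sum4[OF dist, of "\<lambda>v. c v * v i"] by simp
    qed
    moreover have "c w1 \<in> Fqa \<and> c w2 \<in> Fqa \<and> c w3 \<in> Fqa \<and> c w4 \<in> Fqa" using x(2) by simp
    ultimately show "x \<in> {(\<lambda>i. a * w1 i + b * w2 i + c * w3 i + d * w4 i) | a b c d.
           a \<in> Fqa \<and> b \<in> Fqa \<and> c \<in> Fqa \<and> d \<in> Fqa}" by blast
  next
    fix x assume "x \<in> {(\<lambda>i. a * w1 i + b * w2 i + c * w3 i + d * w4 i) | a b c d.
           a \<in> Fqa \<and> b \<in> Fqa \<and> c \<in> Fqa \<and> d \<in> Fqa}"
    then obtain a b c d where x: "x = (\<lambda>i. a * w1 i + b * w2 i + c * w3 i + d * w4 i)"
      "a \<in> Fqa" "b \<in> Fqa" "c \<in> Fqa" "d \<in> Fqa" by blast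
    have nd: "w1 \<noteq> w2" "w1 \<noteq> w3" "w1 \<noteq> w4" "w2 \<noteq> w3" "w2 \<noteq> w4" "w3 \<noteq> w4"
      "w2 \<noteq> w1" "w3 \<noteq> w1" "w4 \<noteq> w1" "w3 \<noteq> w2" "w4 \<noteq> w2" "w4 \<noteq> w3" using dist by auto
    define cf where "cf v = (if v = w1 then a else if v = w2 then b else if v = w3 then c else d)" for v
    have "x = (\<lambda>i. \<Sum>v\<in>{w1,w2,w3,w4}. cf v * v i)"
      unfolding x(1)
    proof (rule ext)
      fix i show "a * w1 i + b * w2 i + c * w3 i + d * w4 i = (\<Sum>v\<in>{w1,w2,w3,w4}. cf v * v i)"
        using sum4[OF dist, of "\<lambda>v. cf v * v i"] nd by (simp add: cf_def)
    qed
    moreover have "\<forall>v\<in>{w1,w2,w3,w4}. cf v \<in> Fqa" using x nd by (simp add: cf_def)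
    ultimately show "x \<in> {(\<lambda>i. \<Sum>v\<in>{w1,w2,w3,w4}. c v * v i) | c. \<forall>v\<in>{w1,w2,w3,w4}. c v \<in> Fqa}"
      by blast
  qed
qed

lemma indep4:
  fixes w1 w2 w3 w4 :: "nat \<Rightarrow> 'a"
  assumes dist: "distinct [w1,w2,w3,w4]"
    and H: "\<And>a b c d. a \<in> Fqa \<Longrightarrow> b \<in> Fqa \<Longrightarrow> c \<in> Fqa \<Longrightarrow> d \<in> Fqa \<Longrightarrow>
        (\<forall>i. a * w1 i + b * w2 i + c * w3 i + d * w4 i = 0) \<Longrightarrow> a = 0 \<and> b = 0 \<and> c = 0 \<and> d = 0"
  shows "fq_indep q {w1,w2,w3,w4}"
  unfolding fq_indep_def
proof (intro conjI allI impI)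
  show "finite {w1,w2,w3,w4}" by simp
next
  fix c :: "(nat \<Rightarrow> 'a) \<Rightarrow> 'a"
  assume h: "(\<forall>v\<in>{w1,w2,w3,w4}. c v \<in> Fqa) \<and> (\<forall>i. (\<Sum>v\<in>{w1,w2,w3,w4}. c v * v i) = 0)"
  have "\<forall>i. c w1 * w1 i + c w2 * w2 i + c w3 * w3 i + c w4 * w4 i = 0"
  proof
    fix i show "c w1 * w1 i + c w2 * w2 i + c w3 * w3 i + c w4 * w4 i = 0"
      using h sum4[OF dist, of "\<lambda>v. c v * v i"] by simp
  qed
  hence "c w1 = 0 \<and> c w2 = 0 \<and> c w3 = 0 \<and> c w4 = 0" using h by (intro H) auto
  thus "\<forall>v\<in>{w1,w2,w3,w4}. c v = 0" by simp
qed

lemma keyN: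
  fixes V :: "(nat \<Rightarrow> 'a) set"
  assumes V: "subsp V" "finite V" "card V \<le> card Fqa ^ 4"
    and mem: "vec None \<in> V" "vec (Some 0) \<in> V" "vec (Some 1) \<in> V" "vec (Some s) \<in> V" "vec (Some u) \<in> V"
    and ne: "s \<noteq> 0" "s \<noteq> 1" "u \<noteq> 0" "u \<noteq> 1" "u \<noteq> s"
  shows "vec y \<in> V \<longleftrightarrow> (y = None \<or> (\<exists>t. y = Some t \<and> F t = t))"
proof -
  define A where "A = vec None"
  define B where "B = vec (Some 0)"
  define C where "C = vec (Some 1)"
  define D where "D = vec (Some s)"
  have dist: "distinct [A, B, C, D]"
  proof -
    have "A 0 \<noteq> B 0" "A 0 \<noteq> C 0" "A 0 \<noteq> D 0" "B 4 \<noteq> C 4" "B 4 \<noteq> D 4" "C 4 \<noteq> D 4"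
      using ne by (simp_all add: A_def B_def C_def D_def vecN_app vecS_app)
    thus ?thesis by auto
  qed
  have indep: "fq_indep q {A, B, C, D}"
  proof (rule indep4[OF dist])
    fix a b c d assume abcd: "a \<in> Fqa" "b \<in> Fqa" "c \<in> Fqa" "d \<in> Fqa"
      and z: "\<forall>i. a * A i + b * B i + c * C i + d * D i = 0"
    have e0: "b + c + d = 0" using spec[OF z, of 0] by (simp add: A_def B_def C_def D_def vecN_app vecS_app)
    have e4: "c + d * s = 0" using spec[OF z, of 4] by (simp add: A_def B_def C_def D_def vecN_app vecS_app)
    have e3: "c + d * (F (F s) * F s) = 0" using spec[OF z, of 3] by (simp add: A_def B_def C_def D_def vecN_app vecS_app)
    have e7: "a + c + d * (F (F s) * F s * s) = 0" using spec[OF z, of 7] by (simp add: A_def B_def C_def D_def vecN_app vecS_app)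
    have d0: "d = 0"
    proof (rule ccontr)
      assume dnz: "d \<noteq> 0"
      have "s = - c / d" using e4 dnz by (simp add: field_simps add_eq_0_iff)
      hence "s \<in> Fqa" using abcd by simp
      hence fs: "F s = s" by (simp add: Fq_iff)
      have e3': "c + d * (s * s) = 0" using e3 fs by simp
      have "d * (s * s - s) = (c + d * (s * s)) - (c + d * s)" by (simp add: algebra_simps)
      hence "d * (s * s - s) = 0" using e3' e4 by simp
      hence "s * s = s" using dnz by simp
      thus False using ne by simp
    qed
    hence "c = 0" using e4 by simp
    thus "a = 0 \<and> b = 0 \<and> c = 0 \<and> d = 0" using d0 e0 e7 by simp
  qed
  have cardW: "card {A, B, C, D} = 4" using dist by simp
  have sub: "fq_span q {A, B, C, D} \<subseteq> V"
    by (rule span_sub_subsp[OF V(1)]) (use mem in \<open>simp add: A_def B_def C_def D_def\<close>)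
  have "card (fq_span q {A, B, C, D}) = card Fqa ^ 4" using card_span_indep[OF indep] cardW by simp
  hence VW: "fq_span q {A, B, C, D} = V" using card_subset_eq[OF V(2) sub] V(3) card_mono[OF V(2) sub]
    by simp
  have VE: "\<And>w. w \<in> V \<longleftrightarrow> (\<exists>a b c d. w = (\<lambda>i. a * A i + b * B i + c * C i + d * D i) \<and>
           a \<in> Fqa \<and> b \<in> Fqa \<and> c \<in> Fqa \<and> d \<in> Fqa)"
    using comb4[OF dist] VW by blast
  obtain a b c d where u: "vec (Some u) = (\<lambda>i. a * A i + b * B i + c * C i + d * D i)"
    "a \<in> Fqa" "b \<in> Fqa" "c \<in> Fqa" "d \<in> Fqa"
    using VE mem(5) by blast
  have u4: "u = c + d * s" using fun_cong[OF u(1), of 4]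
    by (simp add: A_def B_def C_def D_def vecN_app vecS_app)
  have u3: "F (F u) * F u = c + d * (F (F s) * F s)" using fun_cong[OF u(1), of 3]
    by (simp add: A_def B_def C_def D_def vecN_app vecS_app)
  have fs: "F s = s" by (rule alg_main[OF u(4) u(5) u4 u3 ne])
  have ss: "s * s - s \<noteq> 0" using ne by simp
  show ?thesis
  proof
    assume "vec y \<in> V"
    then obtain a b c d where y: "vec y = (\<lambda>i. a * A i + b * B i + c * C i + d * D i)"
      "a \<in> Fqa" "b \<in> Fqa" "c \<in> Fqa" "d \<in> Fqa"
      using VE by blast
    show "y = None \<or> (\<exists>t. y = Some t \<and> F t = t)"
    proof (cases y)
      case (Some t)
      have "t = c + d * s" using fun_cong[OF y(1), of 4] Some
        by (simp add: A_def B_def C_def D_def vecN_app vecS_app)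
      hence "t \<in> Fqa" using y fs by (simp add: Fq_iff)
      thus ?thesis using Some by (simp add: Fq_iff)
    qed simp
  next
    assume "y = None \<or> (\<exists>t. y = Some t \<and> F t = t)"
    thus "vec y \<in> V"
    proof
      assume "y = None" thus ?thesis using mem by simp
    next
      assume "\<exists>t. y = Some t \<and> F t = t"
      then obtain t where t: "y = Some t" "F t = t" by blast
      define d' where "d' = (t * t - t) / (s * s - s)"
      define c' where "c' = t - d' * s"
      define b' where "b' = 1 - c' - d'"
      define a' where "a' = t * t * t - c' - d' * (s * s * s)"
      have inF: "a' \<in> Fqa" "b' \<in> Fqa" "c' \<in> Fqa" "d' \<in> Fqa"
        unfolding a'_def b'_def c'_def d'_def using t(2) fs by (simp_all add: Fq_iff)
      have k1: "c' + d' * s = t" unfolding c'_def by simp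
      have k2: "c' + d' * (s * s) = t * t"
      proof -
        have "c' + d' * (s * s) = t + d' * (s * s - s)" unfolding c'_def by (simp add: algebra_simps)
        also have "d' * (s * s - s) = t * t - t" unfolding d'_def using ss by simp
        finally show ?thesis by simp
      qed
      have "vec y = (\<lambda>i. a' * A i + b' * B i + c' * C i + d' * D i)"
      proof
        fix i
        show "vec y i = a' * A i + b' * B i + c' * C i + d' * D i"
        proof (cases "i < 8")
          case True
          thus ?thesis unfolding less8 using k1 k2
            by (auto simp: t vec_Some_Fq fs A_def B_def C_def D_def vec_None mk8_def a'_def b'_def
                 algebra_simps)
        next
          case False
          thus ?thesis by (simp add: t vec_Some_Fq fs A_def B_def C_def D_def vec_None mk8_def)
        qed
      qed
      thus ?thesis using VE inF by blast
    qed
  qed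
qed

end

type_synonym 'b mat2 = "'b \<times> 'b \<times> 'b \<times> 'b"

definition act :: "'b::field mat2 \<Rightarrow> 'b \<times> 'b \<Rightarrow> 'b \<times> 'b" where
  "act M p = (case M of (a, b, c, d) \<Rightarrow> case p of (x, y) \<Rightarrow> (a * x + b * y, c * x + d * y))"
definition mdet :: "'b::field mat2 \<Rightarrow> 'b" where
  "mdet M = (case M of (a, b, c, d) \<Rightarrow> a * d - b * c)"
definition mmul :: "'b::field mat2 \<Rightarrow> 'b mat2 \<Rightarrow> 'b mat2" where
  "mmul M N = (case M of (a, b, c, d) \<Rightarrow> case N of (e, f, g, h) \<Rightarrow>
     (a * e + b * g, a * f + b * h, c * e + d * g, c * f + d * h))"
definition adj :: "'b::field mat2 \<Rightarrow> 'b mat2" where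
  "adj M = (case M of (a, b, c, d) \<Rightarrow> (d, - b, - c, a))"
definition proj :: "'b::field \<times> 'b \<Rightarrow> 'b option" where
  "proj p = (case p of (x, y) \<Rightarrow> if x = 0 then None else Some (y / x))"
definition rep :: "'b::field option \<Rightarrow> 'b \<times> 'b" where
  "rep x = (case x of None \<Rightarrow> (0, 1) | Some t \<Rightarrow> (1, t))"
definition mob :: "'b::field mat2 \<Rightarrow> 'b option \<Rightarrow> 'b option" where
  "mob M x = proj (act M (rep x))"

lemma act_mmul: "act (mmul M N) p = act M (act N p)"
  by (cases M; cases N; cases p) (simp add: act_def mmul_def algebra_simps)

lemma act_scale: "act M (l * x, l * y) = (l * fst (act M (x, y)), l * snd (act M (x, y)))"
  by (cases M) (simp add: act_def algebra_simps)

lemma proj_scale: "l \<noteq> 0 \<Longrightarrow> proj (l * x, l * y) = proj (x, y)"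
  by (simp add: proj_def)

lemma act_nz: "mdet M \<noteq> 0 \<Longrightarrow> p \<noteq> (0, 0) \<Longrightarrow> act M p \<noteq> (0, 0)"
proof (cases M; cases p)
  fix a b c d x y assume M: "M = (a, b, c, d)" and p: "p = (x, y)" and dt: "mdet M \<noteq> 0"
    and nz: "p \<noteq> (0, 0)"
  show "act M p \<noteq> (0, 0)"
  proof
    assume "act M p = (0, 0)"
    hence e: "a * x + b * y = 0" "c * x + d * y = 0" using M p by (simp_all add: act_def)
    have "(a * d - b * c) * x = d * (a * x + b * y) - b * (c * x + d * y)" by (simp add: algebra_simps)
    hence "(a * d - b * c) * x = 0" using e by simp
    moreover have "(a * d - b * c) * y = a * (c * x + d * y) - c * (a * x + b * y)" by (simp add: algebra_simps)
    hence "(a * d - b * c) * y = 0" using e by simp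
    ultimately show False using dt nz M p by (simp add: mdet_def)
  qed
qed

lemma rep_nz: "rep x \<noteq> (0, 0)" by (cases x) (simp_all add: rep_def)

lemma rep_proj: "p \<noteq> (0, 0) \<Longrightarrow> \<exists>l. l \<noteq> 0 \<and> rep (proj p) = (l * fst p, l * snd p)"
proof (cases p)
  case (Pair x y)
  assume nz: "p \<noteq> (0, 0)"
  show ?thesis
  proof (cases "x = 0")
    case True
    hence "y \<noteq> 0" using nz Pair by simp
    thus ?thesis using True Pair by (intro exI[of _ "1 / y"]) (simp add: rep_def proj_def)
  next
    case False
    thus ?thesis using Pair by (intro exI[of _ "1 / x"]) (simp add: rep_def proj_def)
  qed
qed

lemma mob_mmul: "mdet N \<noteq> 0 \<Longrightarrow> mob M (mob N x) = mob (mmul M N) x"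
proof -
  assume dn: "mdet N \<noteq> 0"
  have nz: "act N (rep x) \<noteq> (0, 0)" using act_nz[OF dn rep_nz] .
  obtain l where l: "l \<noteq> 0" "rep (proj (act N (rep x))) = (l * fst (act N (rep x)), l * snd (act N (rep x)))"
    using rep_proj[OF nz] by blast
  have "mob M (mob N x) = proj (act M (l * fst (act N (rep x)), l * snd (act N (rep x))))"
    unfolding mob_def using l by simp
  also have "\<dots> = proj (act M (act N (rep x)))"
    using l(1) by (simp add: act_scale proj_scale)
  also have "\<dots> = mob (mmul M N) x" by (simp add: mob_def act_mmul)
  finally show ?thesis .
qed

lemma proj_rep: "proj (rep x) = x" by (cases x) (simp_all add: rep_def proj_def)

lemma mdet_adj: "mdet (adj M) = mdet M" by (cases M) (simp add: mdet_def adj_def algebra_simps)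
lemma adj_adj: "adj (adj M) = M" by (cases M) (simp add: adj_def)
lemma mdet_mmul: "mdet (mmul M N) = mdet M * mdet N"
  by (cases M; cases N) (simp add: mdet_def mmul_def algebra_simps)

lemma mob_adj: "mdet M \<noteq> 0 \<Longrightarrow> mob (adj M) (mob M x) = x"
proof -
  assume d: "mdet M \<noteq> 0"
  have "mob (adj M) (mob M x) = mob (mmul (adj M) M) x" by (rule mob_mmul[OF d])
  also have "\<dots> = proj (mdet M * fst (rep x), mdet M * snd (rep x))"
    by (cases M; cases "rep x") (simp add: mob_def act_def mmul_def adj_def mdet_def algebra_simps)
  also have "\<dots> = proj (fst (rep x), snd (rep x))" using proj_scale[OF d] by simp
  also have "\<dots> = x" using proj_rep[of x] by simp
  finally show ?thesis .
qed

lemma mob_adj2: "mdet M \<noteq> 0 \<Longrightarrow> mob M (mob (adj M) x) = x"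
  using mob_adj[of "adj M" x] by (simp add: mdet_adj adj_adj)

lemma mob_inj: "mdet M \<noteq> 0 \<Longrightarrow> mob M x = mob M y \<longleftrightarrow> x = y"
  by (metis mob_adj)

definition GInv :: "'b::field mat2" where "GInv = (0, 1, 1, 0)"
definition GTr :: "'b::field \<Rightarrow> 'b mat2" where "GTr e = (1, 0, e, 1)"
definition GSc :: "'b::field \<Rightarrow> 'b mat2" where "GSc r = (1, 0, 0, r)"

lemma mob_GInv: "mob GInv None = Some 0" "mob GInv (Some t) = (if t = 0 then None else Some (1 / t))"
  by (simp_all add: mob_def GInv_def act_def rep_def proj_def)
lemma mob_GTr: "mob (GTr e) None = None" "mob (GTr e) (Some t) = Some (e + t)"
  by (simp_all add: mob_def GTr_def act_def rep_def proj_def)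
lemma mob_GSc: "r \<noteq> 0 \<Longrightarrow> mob (GSc r) None = None" "mob (GSc r) (Some t) = Some (r * t)"
  by (simp_all add: mob_def GSc_def act_def rep_def proj_def)
lemma mdet_G: "mdet (GInv :: 'b::field mat2) \<noteq> 0" "mdet (GTr e) \<noteq> 0" "r \<noteq> 0 \<Longrightarrow> mdet (GSc r) \<noteq> 0"
  by (simp_all add: mdet_def GInv_def GTr_def GSc_def)

context FF
begin

abbreviation U1a :: "(nat \<Rightarrow> 'a) set" where "U1a \<equiv> U1 q"

definition linmap :: "((nat \<Rightarrow> 'a) \<Rightarrow> nat \<Rightarrow> 'a) \<Rightarrow> bool" where
  "linmap P \<longleftrightarrow> (\<forall>(T :: (nat \<Rightarrow> 'a) set) c f. P (\<lambda>i. \<Sum>x\<in>T. c x * f x i) = (\<lambda>i. \<Sum>x\<in>T. c x * P (f x) i))"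

definition vInv :: "(nat \<Rightarrow> 'a) \<Rightarrow> nat \<Rightarrow> 'a" where
  "vInv w = mk8 [w 7, w 6, w 5, w 4, w 3, w 2, w 1, w 0]"

definition vTr :: "'a \<Rightarrow> (nat \<Rightarrow> 'a) \<Rightarrow> nat \<Rightarrow> 'a" where
  "vTr e w = mk8 [w 0, w 1 + F (F e) * w 0, w 2 + F e * w 0,
     w 3 + F e * w 1 + F (F e) * w 2 + F e * F (F e) * w 0,
     w 4 + e * w 0, w 5 + e * w 1 + F (F e) * w 4 + e * F (F e) * w 0,
     w 6 + e * w 2 + F e * w 4 + e * F e * w 0,
     w 7 + e * w 3 + F e * w 5 + F (F e) * w 6 + e * F e * w 1 + e * F (F e) * w 2
         + F e * F (F e) * w 4 + e * F e * F (F e) * w 0]"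

definition vSc :: "'a \<Rightarrow> (nat \<Rightarrow> 'a) \<Rightarrow> nat \<Rightarrow> 'a" where
  "vSc r w = mk8 [w 0, F (F r) * w 1, F r * w 2, F r * F (F r) * w 3, r * w 4,
     r * F (F r) * w 5, r * F r * w 6, r * F r * F (F r) * w 7]"

lemma linmap_vInv: "linmap vInv"
  unfolding linmap_def
proof (intro allI ext)
  fix T :: "(nat \<Rightarrow> 'a) set" and c f i
  show "vInv (\<lambda>i. \<Sum>x\<in>T. c x * f x i) i = (\<Sum>x\<in>T. c x * vInv (f x) i)"
    by (cases "i < 8") (auto simp: less8 vInv_def mk8_def)
qed

lemma linmap_vTr: "linmap (vTr e)"
  unfolding linmap_def
proof (intro allI ext)
  fix T :: "(nat \<Rightarrow> 'a) set" and c f i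
  show "vTr e (\<lambda>i. \<Sum>x\<in>T. c x * f x i) i = (\<Sum>x\<in>T. c x * vTr e (f x) i)"
    by (cases "i < 8") (auto simp: less8 vTr_def mk8_def sum.distrib sum_distrib_left algebra_simps)
qed

lemma linmap_vSc: "linmap (vSc r)"
  unfolding linmap_def
proof (intro allI ext)
  fix T :: "(nat \<Rightarrow> 'a) set" and c f i
  show "vSc r (\<lambda>i. \<Sum>x\<in>T. c x * f x i) i = (\<Sum>x\<in>T. c x * vSc r (f x) i)"
    by (cases "i < 8") (auto simp: less8 vSc_def mk8_def sum.distrib sum_distrib_left algebra_simps)
qed

lemma linmap_scale: "linmap P \<Longrightarrow> P (\<lambda>i. l * w i) = (\<lambda>i. l * P w i)"
proof -
  assume "linmap P"
  hence h: "\<forall>(T :: (nat \<Rightarrow> 'a) set) c f. P (\<lambda>i. \<Sum>x\<in>T. c x * f x i) = (\<lambda>i. \<Sum>x\<in>T. c x * P (f x) i)"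
    unfolding linmap_def .
  have h1: "\<forall>c f. P (\<lambda>i. \<Sum>x\<in>{w}. c x * f x i) = (\<lambda>i. \<Sum>x\<in>{w}. c x * P (f x) i)"
    using spec[OF h, of "{w}"] .
  have h2: "\<forall>f. P (\<lambda>i. \<Sum>x\<in>{w}. l * f x i) = (\<lambda>i. \<Sum>x\<in>{w}. l * P (f x) i)"
    using spec[OF h1, of "\<lambda>_. l"] .
  have "P (\<lambda>i. \<Sum>x\<in>{w}. l * id x i) = (\<lambda>i. \<Sum>x\<in>{w}. l * P (id x) i)"
    using spec[OF h2, of id] .
  thus ?thesis by simp
qed

lemma linmap_comp: "linmap P1 \<Longrightarrow> linmap P2 \<Longrightarrow> linmap (P1 \<circ> P2)"
  unfolding linmap_def
proof (intro allI)
  fix T :: "(nat \<Rightarrow> 'a) set" and c f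
  assume h1: "\<forall>(T :: (nat \<Rightarrow> 'a) set) c f. P1 (\<lambda>i. \<Sum>x\<in>T. c x * f x i) = (\<lambda>i. \<Sum>x\<in>T. c x * P1 (f x) i)"
    and h2: "\<forall>(T :: (nat \<Rightarrow> 'a) set) c f. P2 (\<lambda>i. \<Sum>x\<in>T. c x * f x i) = (\<lambda>i. \<Sum>x\<in>T. c x * P2 (f x) i)"
  have "(P1 \<circ> P2) (\<lambda>i. \<Sum>x\<in>T. c x * f x i) = P1 (\<lambda>i. \<Sum>x\<in>T. c x * P2 (f x) i)"
    using h2 by simp
  also have "\<dots> = (\<lambda>i. \<Sum>x\<in>T. c x * P1 (P2 (f x)) i)"
    using spec[OF spec[OF spec[OF h1, of T], of c], of "\<lambda>x. P2 (f x)"] by simp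
  finally show "(P1 \<circ> P2) (\<lambda>i. \<Sum>x\<in>T. c x * f x i) = (\<lambda>i. \<Sum>x\<in>T. c x * (P1 \<circ> P2) (f x) i)"
    by simp
qed

lemma vInv_U1: "vInv (U1vec q a b c d) = U1vec q d c b a"
  by (simp add: vInv_def U1vec_mk8 mk8_def)

lemma vTr_U1: "F a = a \<Longrightarrow> vTr e (U1vec q a b c d) = U1vec q a (b + e * a)
   (c + F (F e) * F b + F e * F (F b) + F e * F (F e) * a)
   (d + e * c + F e * F c + F (F e) * F (F c) + e * F e * F (F b) + e * F (F e) * F b
      + F e * F (F e) * b + e * F e * F (F e) * a)"
  by (simp add: vTr_def U1vec_mk8 mk8_def mk8_eq algebra_simps)

lemma vSc_U1: "vSc r (U1vec q a b c d) = U1vec q a (r * b) (F r * F (F r) * c) (r * F r * F (F r) * d)"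
  by (simp add: vSc_def U1vec_mk8 mk8_def mk8_eq algebra_simps)

lemma U1_mem: "(w :: nat \<Rightarrow> 'a) \<in> U1a \<longleftrightarrow> (\<exists>a b c d. w = U1vec q a b c d \<and> F a = a \<and> F d = d)"
  by (auto simp: U1_def Fq_iff)

lemma U1_iff: "(w :: nat \<Rightarrow> 'a) \<in> U1a \<longleftrightarrow> (\<forall>i\<ge>8. w i = 0) \<and> w 1 = F (F (w 4)) \<and> w 2 = F (w 4) \<and>
    w 5 = F (w 3) \<and> w 6 = F (F (w 3)) \<and> F (w 0) = w 0 \<and> F (w 7) = w 7"
proof
  assume "w \<in> U1a"
  then obtain a b c d where "w = U1vec q a b c d" "F a = a" "F d = d" using U1_mem by blast
  thus "(\<forall>i\<ge>8. w i = 0) \<and> w 1 = F (F (w 4)) \<and> w 2 = F (w 4) \<and>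
    w 5 = F (w 3) \<and> w 6 = F (F (w 3)) \<and> F (w 0) = w 0 \<and> F (w 7) = w 7"
    by (simp add: U1vec_mk8 mk8_def)
next
  assume h: "(\<forall>i\<ge>8. w i = 0) \<and> w 1 = F (F (w 4)) \<and> w 2 = F (w 4) \<and>
    w 5 = F (w 3) \<and> w 6 = F (F (w 3)) \<and> F (w 0) = w 0 \<and> F (w 7) = w 7"
  have "w = U1vec q (w 0) (w 4) (w 3) (w 7)"
  proof
    fix i show "w i = U1vec q (w 0) (w 4) (w 3) (w 7) i"
      using h by (cases "i < 8") (auto simp: less8 U1vec_mk8 mk8_def)
  qed
  thus "w \<in> U1a" using h U1_mem by blast
qed

lemma sum_F2: "(\<And>v. v \<in> T \<Longrightarrow> g v = F (F (h v))) \<Longrightarrow> (\<Sum>v\<in>T. g v) = F (F (\<Sum>v\<in>T. h v))"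
  by (simp add: F_sum)
lemma sum_F1: "(\<And>v. v \<in> T \<Longrightarrow> g v = F (h v)) \<Longrightarrow> (\<Sum>v\<in>T. g v) = F (\<Sum>v\<in>T. h v)"
  by (simp add: F_sum)

lemma span_U1:
  assumes "(S :: (nat \<Rightarrow> 'a) set) \<subseteq> U1a"
  shows "fq_span q S \<subseteq> U1a"
proof
  fix w assume "w \<in> fq_span q S"
  then obtain T c where w: "w = (\<lambda>i. \<Sum>v\<in>T. c v * v i)" "finite T" "T \<subseteq> S" "\<forall>v\<in>T. c v \<in> Fqa"
    unfolding fq_span_def by blast
  have vU: "\<And>v. v \<in> T \<Longrightarrow> (\<forall>i\<ge>8. v i = 0) \<and> v 1 = F (F (v 4)) \<and> v 2 = F (v 4) \<and>
    v 5 = F (v 3) \<and> v 6 = F (F (v 3)) \<and> F (v 0) = v 0 \<and> F (v 7) = v 7"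
    using w(3) assms U1_iff by blast
  have cF: "\<And>v. v \<in> T \<Longrightarrow> F (c v) = c v" using w(4) by (simp add: Fq_iff)
  have c8: "\<forall>i\<ge>8. (\<Sum>v\<in>T. c v * v i) = 0"
  proof (intro allI impI)
    fix i :: nat assume "8 \<le> i"
    hence "\<And>v. v \<in> T \<Longrightarrow> c v * v i = 0" using vU by simp
    thus "(\<Sum>v\<in>T. c v * v i) = 0" by (rule sum.neutral[OF ballI])
  qed
  have c1: "(\<Sum>v\<in>T. c v * v 1) = F (F (\<Sum>v\<in>T. c v * v 4))"
  proof (rule sum_F2)
    fix v assume "v \<in> T"
    hence "v 1 = F (F (v 4))" "F (c v) = c v" using vU cF by blast+
    thus "c v * v 1 = F (F (c v * v 4))" by simp
  qed
  have c2: "(\<Sum>v\<in>T. c v * v 2) = F (\<Sum>v\<in>T. c v * v 4)"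
  proof (rule sum_F1)
    fix v assume "v \<in> T"
    hence "v 2 = F (v 4)" "F (c v) = c v" using vU cF by blast+
    thus "c v * v 2 = F (c v * v 4)" by simp
  qed
  have c5: "(\<Sum>v\<in>T. c v * v 5) = F (\<Sum>v\<in>T. c v * v 3)"
  proof (rule sum_F1)
    fix v assume "v \<in> T"
    hence "v 5 = F (v 3)" "F (c v) = c v" using vU cF by blast+
    thus "c v * v 5 = F (c v * v 3)" by simp
  qed
  have c6: "(\<Sum>v\<in>T. c v * v 6) = F (F (\<Sum>v\<in>T. c v * v 3))"
  proof (rule sum_F2)
    fix v assume "v \<in> T"
    hence "v 6 = F (F (v 3))" "F (c v) = c v" using vU cF by blast+
    thus "c v * v 6 = F (F (c v * v 3))" by simp
  qed
  have c0: "F (\<Sum>v\<in>T. c v * v 0) = (\<Sum>v\<in>T. c v * v 0)"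
  proof (rule sym, rule sum_F1)
    fix v assume "v \<in> T"
    hence "F (v 0) = v 0" "F (c v) = c v" using vU cF by blast+
    thus "c v * v 0 = F (c v * v 0)" by simp
  qed
  have c7: "F (\<Sum>v\<in>T. c v * v 7) = (\<Sum>v\<in>T. c v * v 7)"
  proof (rule sym, rule sum_F1)
    fix v assume "v \<in> T"
    hence "F (v 7) = v 7" "F (c v) = c v" using vU cF by blast+
    thus "c v * v 7 = F (c v * v 7)" by simp
  qed
  show "w \<in> U1a" unfolding U1_iff w(1) using c8 c1 c2 c5 c6 c0 c7 by simp
qed

definition good :: "((nat \<Rightarrow> 'a) \<Rightarrow> nat \<Rightarrow> 'a) \<Rightarrow> 'a mat2 \<Rightarrow> bool" where
  "good P G \<longleftrightarrow> linmap P \<and> (\<forall>w\<in>U1a. P w \<in> U1a) \<and> inj_on P (U1a) \<and> mdet G \<noteq> 0 \<and>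
     (\<forall>x. \<exists>l. l \<in> Fqa \<and> l \<noteq> 0 \<and> P (vec x) = (\<lambda>i. l * vec (mob G x) i))"

lemma good_comp:
  assumes g1: "good P1 G1" and g2: "good P2 G2"
  shows "good (P1 \<circ> P2) (mmul G1 G2)"
  unfolding good_def
proof (intro conjI allI ballI)
  show "linmap (P1 \<circ> P2)" using g1 g2 linmap_comp unfolding good_def by blast
next
  fix w assume "w \<in> U1a" thus "(P1 \<circ> P2) w \<in> U1a" using g1 g2 unfolding good_def by simp
next
  have "inj_on P2 (U1a)" "P2 ` U1a \<subseteq> U1a" "inj_on P1 (U1a)" using g1 g2 unfolding good_def by auto
  thus "inj_on (P1 \<circ> P2) (U1a)" using comp_inj_on inj_on_subset by metis
next
  show "mdet (mmul G1 G2) \<noteq> 0" using g1 g2 unfolding good_def by (simp add: mdet_mmul)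
next
  fix x
  obtain l2 where l2: "l2 \<in> Fqa" "l2 \<noteq> 0" "P2 (vec x) = (\<lambda>i. l2 * vec (mob G2 x) i)"
    using g2 unfolding good_def by blast
  obtain l1 where l1: "l1 \<in> Fqa" "l1 \<noteq> 0" "P1 (vec (mob G2 x)) = (\<lambda>i. l1 * vec (mob G1 (mob G2 x)) i)"
    using g1 unfolding good_def by blast
  have lm: "linmap P1" using g1 unfolding good_def by blast
  have d2: "mdet G2 \<noteq> 0" using g2 unfolding good_def by blast
  have "(P1 \<circ> P2) (vec x) = (\<lambda>i. (l2 * l1) * vec (mob (mmul G1 G2) x) i)"
    using l2(3) linmap_scale[OF lm] l1(3) mob_mmul[OF d2] by (simp add: mult.assoc)
  thus "\<exists>l. l \<in> Fqa \<and> l \<noteq> 0 \<and> (P1 \<circ> P2) (vec x) = (\<lambda>i. l * vec (mob (mmul G1 G2) x) i)"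
    using l1 l2 by (intro exI[of _ "l2 * l1"]) simp
qed

end

context FF
begin

lemma U1vec_in: "F a = a \<Longrightarrow> F d = d \<Longrightarrow> U1vec q a b c d \<in> U1a"
  unfolding U1_mem by blast

lemma vec_U1: "vec x \<in> U1a"
proof (cases x)
  case None thus ?thesis by (simp add: vec_def U1vec_in)
next
  case (Some t)
  have "U1vec q 1 t (F (F t) * F t) (F (F t) * F t * t) \<in> U1a"
    by (rule U1vec_in) (simp_all add: algebra_simps)
  thus ?thesis using Some by (simp add: vec_Some_U1)
qed

lemma U1vec_scale: "(\<lambda>i. l * U1vec q a b c d i) = U1vec q (l * a) (l * b) (l * c) (l * d)" if "F l = l"
proof
  fix i show "l * U1vec q a b c d i = U1vec q (l * a) (l * b) (l * c) (l * d) i"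
    using that by (cases "i < 8") (auto simp: less8 U1vec_mk8 mk8_def)
qed

lemma vec_None_U1: "vec None = U1vec q 0 0 0 1" by (simp add: vec_def)

lemma good_Inv: "good vInv GInv"
  unfolding good_def
proof (intro conjI ballI allI)
  show "linmap vInv" by (rule linmap_vInv)
next
  fix w assume "w \<in> U1a"
  then obtain a b c d where "w = U1vec q a b c d" "F a = a" "F d = d" using U1_mem by blast
  thus "vInv w \<in> U1a" by (simp add: vInv_U1 U1vec_in)
next
  show "inj_on vInv U1a"
  proof (rule inj_onI)
    fix w w' assume "w \<in> U1a" "w' \<in> U1a" and e: "vInv w = vInv w'"
    then obtain a b c d a' b' c' d' where "w = U1vec q a b c d" "w' = U1vec q a' b' c' d'"
      using U1_mem by meson
    thus "w = w'" using e by (simp add: vInv_U1 U1vec_inj)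
  qed
next
  show "mdet GInv \<noteq> 0" by (rule mdet_G)
next
  fix x
  show "\<exists>l. l \<in> Fqa \<and> l \<noteq> 0 \<and> vInv (vec x) = (\<lambda>i. l * vec (mob GInv x) i)"
  proof (cases x)
    case None
    thus ?thesis by (intro exI[of _ 1]) (simp add: mob_GInv vec_None_U1 vec_Some_U1 vInv_U1)
  next
    case (Some t)
    show ?thesis
    proof (cases "t = 0")
      case True
      thus ?thesis using Some by (intro exI[of _ 1]) (simp add: mob_GInv vec_None_U1 vec_Some_U1 vInv_U1)
    next
      case False
      define l where "l = F (F t) * F t * t"
      have fl: "F l = l" unfolding l_def by (simp add: algebra_simps)
      have lnz: "l \<noteq> 0" unfolding l_def using False by simp
      have A: "vInv (vec x) = U1vec q (F (F t) * F t * t) (F (F t) * F t) t 1"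
        using Some by (simp add: vec_Some_U1 vInv_U1)
      have B: "(\<lambda>i. l * vec (mob GInv x) i) = U1vec q (l * 1) (l * (1 / t))
          (l * (F (F (1 / t)) * F (1 / t))) (l * (F (F (1 / t)) * F (1 / t) * (1 / t)))"
        using Some False by (simp only: mob_GInv vec_Some_U1 U1vec_scale[OF fl] if_False option.simps)
      have ftz: "F t \<noteq> 0" "F (F t) \<noteq> 0" using False by simp_all
      have C: "U1vec q (F (F t) * F t * t) (F (F t) * F t) t 1 = U1vec q (l * 1) (l * (1 / t))
          (l * (F (F (1 / t)) * F (1 / t))) (l * (F (F (1 / t)) * F (1 / t) * (1 / t)))"
        unfolding U1vec_inj l_def using False ftz by (simp add: field_simps)
      have "vInv (vec x) = (\<lambda>i. l * vec (mob GInv x) i)"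
        using A B C by simp
      thus ?thesis using fl lnz by (intro exI[of _ l]) (simp add: Fq_iff)
    qed
  qed
qed

lemma good_Tr: "good (vTr e) (GTr e)"
  unfolding good_def
proof (intro conjI ballI allI)
  show "linmap (vTr e)" by (rule linmap_vTr)
next
  fix w assume "w \<in> U1a"
  then obtain a b c d where "w = U1vec q a b c d" "F a = a" "F d = d" using U1_mem by blast
  thus "vTr e w \<in> U1a" by (simp add: vTr_U1) (intro U1vec_in; simp add: algebra_simps)
next
  show "inj_on (vTr e) U1a"
  proof (rule inj_onI)
    fix w w' assume "w \<in> U1a" "w' \<in> U1a" and e: "vTr e w = vTr e w'"
    then obtain a b c d a' b' c' d' where w: "w = U1vec q a b c d" "w' = U1vec q a' b' c' d'"
      "F a = a" "F a' = a'"
      using U1_mem by meson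
    have E: "a = a' \<and> b + e * a = b' + e * a' \<and> c + F (F e) * F b + F e * F (F b) + F e * F (F e) * a =
       c' + F (F e) * F b' + F e * F (F b') + F e * F (F e) * a' \<and>
      d + e * c + F e * F c + F (F e) * F (F c) + e * F e * F (F b) + e * F (F e) * F b
      + F e * F (F e) * b + e * F e * F (F e) * a = d' + e * c' + F e * F c' + F (F e) * F (F c') + e * F e * F (F b') + e * F (F e) * F b'
      + F e * F (F e) * b' + e * F e * F (F e) * a'"
    proof -
      have "vTr e (U1vec q a b c d) = vTr e (U1vec q a' b' c' d')" using e w by simp
      thus ?thesis unfolding vTr_U1[OF w(3)] vTr_U1[OF w(4)] U1vec_inj .
    qed
    have ha: "a = a'" using E by (rule conjunct1)
    have hb: "b = b'" using E[THEN conjunct2, THEN conjunct1] ha by simp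
    have hc: "c = c'" using E[THEN conjunct2, THEN conjunct2, THEN conjunct1] ha hb by simp
    have hd: "d = d'" using E[THEN conjunct2, THEN conjunct2, THEN conjunct2] ha hb hc by simp
    show "w = w'" using w ha hb hc hd by simp
  qed
next
  show "mdet (GTr e) \<noteq> 0" by (rule mdet_G)
next
  fix x
  show "\<exists>l. l \<in> Fqa \<and> l \<noteq> 0 \<and> vTr e (vec x) = (\<lambda>i. l * vec (mob (GTr e) x) i)"
  proof (cases x)
    case None
    thus ?thesis by (intro exI[of _ 1]) (simp add: mob_GTr vec_None_U1 vTr_U1)
  next
    case (Some t)
    thus ?thesis by (intro exI[of _ 1]) (simp add: mob_GTr vec_Some_U1 vTr_U1 U1vec_inj algebra_simps)
  qed
qed

lemma good_Sc: "r \<noteq> 0 \<Longrightarrow> good (vSc r) (GSc r)"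
  unfolding good_def
proof (intro conjI ballI allI)
  assume r: "r \<noteq> 0"
  show "linmap (vSc r)" by (rule linmap_vSc)
next
  fix w assume "w \<in> U1a"
  then obtain a b c d where "w = U1vec q a b c d" "F a = a" "F d = d" using U1_mem by blast
  thus "vSc r w \<in> U1a" by (simp add: vSc_U1) (intro U1vec_in; simp add: algebra_simps)
next
  assume r: "r \<noteq> 0"
  show "inj_on (vSc r) U1a"
  proof (rule inj_onI)
    fix w w' assume "w \<in> U1a" "w' \<in> U1a" and e: "vSc r w = vSc r w'"
    then obtain a b c d a' b' c' d' where w: "w = U1vec q a b c d" "w' = U1vec q a' b' c' d'"
      using U1_mem by meson
    thus "w = w'" using e r by (simp add: vSc_U1 U1vec_inj)
  qed
next
  assume r: "r \<noteq> 0"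
  show "mdet (GSc r) \<noteq> 0" using r by (rule mdet_G)
next
  fix x assume r: "r \<noteq> 0"
  show "\<exists>l. l \<in> Fqa \<and> l \<noteq> 0 \<and> vSc r (vec x) = (\<lambda>i. l * vec (mob (GSc r) x) i)"
  proof (cases x)
    case None
    have "F (r * F r * F (F r)) = r * F r * F (F r)" by (simp add: algebra_simps)
    moreover have "r * F r * F (F r) \<noteq> 0" using r by simp
    moreover have "vSc r (vec x) = (\<lambda>i. (r * F r * F (F r)) * vec (mob (GSc r) x) i)"
      using None r calculation(1) by (simp add: mob_GSc vec_None_U1 vSc_U1 U1vec_scale)
    ultimately show ?thesis by (intro exI[of _ "r * F r * F (F r)"]) (simp add: Fq_iff)
  next
    case (Some t)
    thus ?thesis by (intro exI[of _ 1]) (simp add: mob_GSc vec_Some_U1 vSc_U1 U1vec_inj algebra_simps)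
  qed
qed

end

context FF
begin

lemma norm_None:
  assumes "x2 \<noteq> x3" "x2 \<noteq> None" "x3 \<noteq> None"
  shows "\<exists>P G. good P G \<and> mob G None = None \<and> mob G x2 = Some 0 \<and> mob G x3 = Some 1"
proof -
  obtain a b where ab: "x2 = Some a" "x3 = Some b" using assms by auto
  have ba: "b - a \<noteq> 0" using assms ab by simp
  define r where "r = 1 / (b - a)"
  have r: "r \<noteq> 0" using ba by (simp add: r_def)
  have g: "good (vSc r \<circ> vTr (- a)) (mmul (GSc r) (GTr (- a)))"
    by (rule good_comp[OF good_Sc[OF r] good_Tr])
  have m: "\<And>x. mob (mmul (GSc r) (GTr (- a))) x = mob (GSc r) (mob (GTr (- a)) x)"
    using mob_mmul[OF mdet_G(2)] by metis
  have rb: "r * (- a + b) = 1" using ba by (simp add: r_def)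
  have "mob (mmul (GSc r) (GTr (- a))) None = None \<and> mob (mmul (GSc r) (GTr (- a))) x2 = Some 0
     \<and> mob (mmul (GSc r) (GTr (- a))) x3 = Some 1"
    unfolding m using r rb by (simp add: mob_GTr mob_GSc ab)
  thus ?thesis using g by blast
qed

lemma norm3:
  assumes "distinct [x1, x2, x3]"
  shows "\<exists>P G. good P G \<and> mob G x1 = None \<and> mob G x2 = Some 0 \<and> mob G x3 = Some 1"
proof (cases x1)
  case None
  have d: "x1 \<noteq> x2" "x1 \<noteq> x3" "x2 \<noteq> x3" using assms by simp_all
  have "x2 \<noteq> x3" "x2 \<noteq> None" "x3 \<noteq> None" using d None by metis+
  then obtain P G where "good P G \<and> mob G None = None \<and> mob G x2 = Some 0 \<and> mob G x3 = Some 1"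
    using norm_None by blast
  thus ?thesis using None by blast
next
  case (Some a)
  define G0 where "G0 = mmul GInv (GTr (- a))"
  have g0: "good (vInv \<circ> vTr (- a)) G0" unfolding G0_def by (rule good_comp[OF good_Inv good_Tr])
  have d0: "mdet G0 \<noteq> 0" using g0 unfolding good_def by blast
  have m0: "\<And>x. mob G0 x = mob GInv (mob (GTr (- a)) x)"
    unfolding G0_def using mob_mmul[OF mdet_G(2)] by metis
  have y1: "mob G0 x1 = None" using Some by (simp add: m0 mob_GTr mob_GInv)
  have "mob G0 x2 \<noteq> mob G0 x3" "mob G0 x2 \<noteq> mob G0 x1" "mob G0 x3 \<noteq> mob G0 x1"
    using assms mob_inj[OF d0] by auto
  then obtain P1 G1 where g1: "good P1 G1" "mob G1 None = None" "mob G1 (mob G0 x2) = Some 0"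
    "mob G1 (mob G0 x3) = Some 1"
    using norm_None[of "mob G0 x2" "mob G0 x3"] y1 by auto
  have g: "good (P1 \<circ> (vInv \<circ> vTr (- a))) (mmul G1 G0)" by (rule good_comp[OF g1(1) g0])
  have "mob (mmul G1 G0) x1 = None \<and> mob (mmul G1 G0) x2 = Some 0 \<and> mob (mmul G1 G0) x3 = Some 1"
    by (simp add: mob_mmul[OF d0, symmetric] y1 g1)
  thus ?thesis using g by blast
qed

definition Pt :: "'a option \<Rightarrow> (nat \<Rightarrow> 'a) set" where "Pt x = fq_span q {vec x}"

lemma Pt_Some: "Pt (Some t) = Ppt q 1 t (t ^ (q^2 + q)) (t ^ (q^2 + q + 1))"
  by (simp add: Pt_def vec_def Ppt_def)
lemma Pt_None: "Pt None = Ppt q 0 0 0 1"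
  by (simp add: Pt_def vec_def Ppt_def)

lemma O1_eq: "(O1 q :: (nat \<Rightarrow> 'a) set set) = range Pt"
proof (intro equalityI subsetI)
  fix P :: "(nat \<Rightarrow> 'a) set"
  assume "P \<in> O1 q"
  then consider t where "P = Ppt q 1 t (t ^ (q^2 + q)) (t ^ (q^2 + q + 1))" | "P = Ppt q 0 0 0 1"
    unfolding O1_def by blast
  thus "P \<in> range Pt"
  proof cases
    case (1 t) thus ?thesis using Pt_Some[of t] by (metis rangeI)
  next
    case 2 thus ?thesis using Pt_None by (metis rangeI)
  qed
next
  fix P :: "(nat \<Rightarrow> 'a) set"
  assume "P \<in> range Pt"
  then obtain x where x: "P = Pt x" by blast
  show "P \<in> O1 q"
  proof (cases x)
    case None thus ?thesis using x Pt_None unfolding O1_def by blast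
  next
    case (Some t) thus ?thesis using x Pt_Some unfolding O1_def by blast
  qed
qed

lemma theta_eq: "theta q p = Pt (proj p)"
  by (cases p) (simp add: theta_def proj_def Pt_def vec_def Ppt_def Let_def)

lemma Pt_inj: "Pt x = Pt y \<Longrightarrow> x = y"
proof -
  assume e: "Pt x = Pt y"
  have "vec x \<in> Pt y" using e self_in_span[of "vec x"] by (simp add: Pt_def)
  then obtain c where c: "vec x = (\<lambda>i. \<Sum>v\<in>{vec y}. c v * v i)"
    unfolding Pt_def span_finite_eq[OF finite.insertI[OF finite.emptyI]] by blast
  hence c': "\<And>i. vec x i = c (vec y) * vec y i" by (simp add: fun_eq_iff)
  show "x = y"
  proof (cases x)
    case None
    have "1 = c (vec y) * vec y 7" using c'[of 7] None by (simp add: vecN_app)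
    hence "c (vec y) \<noteq> 0" by auto
    moreover have "0 = c (vec y) * vec y 0" using c'[of 0] None by (simp add: vecN_app)
    ultimately have "vec y 0 = 0" by simp
    hence "y = None" by (cases y) (simp_all add: vecS_app)
    thus ?thesis using None by simp
  next
    case (Some t)
    have h0: "1 = c (vec y) * vec y 0" using c'[of 0] Some by (simp add: vecS_app)
    then obtain s where ys: "y = Some s" by (cases y) (simp_all add: vecN_app)
    hence "c (vec y) = 1" using h0 by (simp add: vecS_app)
    hence "t = s" using c'[of 4] Some ys by (simp add: vecS_app)
    thus ?thesis using Some ys by simp
  qed
qed

end

lemma list5: "length xs = 5 \<Longrightarrow> \<exists>a b c d e. xs = [a, b, c, d, e]"
  by (auto simp: numeral_eq_Suc length_Suc_conv)

context FF
begin

lemma main_loc: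
  fixes \<Sigma> :: "(nat \<Rightarrow> 'a) set" and X :: "(nat \<Rightarrow> 'a) set set"
  assumes sol: "is_solid q \<Sigma>" and XO: "X \<subseteq> O1 q" and X5: "card X = 5" and XS: "\<forall>P\<in>X. P \<subseteq> \<Sigma>"
  shows "\<exists>C. twisted_cubic_O1 q C \<and> X \<subseteq> C \<and> C = {P \<in> O1 q. P \<subseteq> \<Sigma>}"
proof -
  obtain S where S: "S \<subseteq> U1a" "card S = 4" "\<Sigma> = fq_span q S"
    using sol unfolding is_solid_def by blast
  have finS: "finite S" using S(2) by (metis card.infinite zero_neq_numeral)
  have subS: "subsp \<Sigma>" using span_subsp[OF finS] S(3) by simp
  have finSig: "finite \<Sigma>" using card_span_le(1)[OF finS] S(3) by simp
  have cardSig: "card \<Sigma> \<le> card Fqa ^ 4" using card_span_le(2)[OF finS] S by simp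
  have SigU: "\<Sigma> \<subseteq> U1a" using span_U1[OF S(1)] S(3) by simp
  have memS: "\<And>x. Pt x \<subseteq> \<Sigma> \<longleftrightarrow> vec x \<in> \<Sigma>" using pt_sub[OF subS] by (simp add: Pt_def)
  define Y where "Y = {x. Pt x \<in> X}"
  have XY: "X = Pt ` Y" using XO O1_eq unfolding Y_def by auto
  have injPt: "inj Pt" using Pt_inj by (auto intro: injI)
  have cY: "card Y = 5" using X5 XY card_image[OF inj_on_subset[OF injPt]] by auto
  have finY: "finite Y" using cY by (metis card.infinite zero_neq_numeral)
  obtain xs where xs: "set xs = Y" "distinct xs" using finite_distinct_list[OF finY] by blast
  have "length xs = 5" using distinct_card[OF xs(2)] xs(1) cY by simp
  then obtain x1 x2 x3 x4 x5 where xs5: "xs = [x1, x2, x3, x4, x5]" using list5 by blast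
  have dist: "distinct [x1, x2, x3, x4, x5]" using xs(2) xs5 by simp
  have inS: "\<And>x. x \<in> Y \<Longrightarrow> vec x \<in> \<Sigma>" using XS memS unfolding Y_def by blast
  have inS5: "vec x1 \<in> \<Sigma>" "vec x2 \<in> \<Sigma>" "vec x3 \<in> \<Sigma>" "vec x4 \<in> \<Sigma>" "vec x5 \<in> \<Sigma>"
    using inS xs(1) xs5 by auto
  obtain Pm G where PG: "good Pm G" "mob G x1 = None" "mob G x2 = Some 0" "mob G x3 = Some 1"
    using norm3[of x1 x2 x3] dist by auto
  have lm: "linmap Pm" and PU: "\<forall>w\<in>U1a. Pm w \<in> U1a" and injP: "inj_on Pm U1a" and dG: "mdet G \<noteq> 0"
    and vP: "\<And>x. \<exists>l. l \<in> Fqa \<and> l \<noteq> 0 \<and> Pm (vec x) = (\<lambda>i. l * vec (mob G x) i)"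
    using PG(1) unfolding good_def by blast+
  define V where "V = Pm ` \<Sigma>"
  have subV: "subsp V"
    unfolding subsp_def
  proof (intro allI impI)
    fix T and c :: "(nat \<Rightarrow> 'a) \<Rightarrow> 'a"
    assume h: "finite T \<and> T \<subseteq> V \<and> (\<forall>v\<in>T. c v \<in> Fqa)"
    obtain T0 where T0: "T0 \<subseteq> \<Sigma>" "finite T0" "T = Pm ` T0"
      using finite_subset_image[of T Pm \<Sigma>] h unfolding V_def by blast
    have inj0: "inj_on Pm T0" using inj_on_subset[OF injP] T0(1) SigU by blast
    have "(\<lambda>i. \<Sum>v\<in>T. c v * v i) = (\<lambda>i. \<Sum>v\<in>T0. c (Pm v) * Pm v i)"
      unfolding T0(3)
    proof (rule ext)
      fix i show "(\<Sum>v\<in>Pm ` T0. c v * v i) = (\<Sum>v\<in>T0. c (Pm v) * Pm v i)"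
        using sum.reindex[OF inj0, of "\<lambda>v. c v * v i"] by simp
    qed
    also have "\<dots> = Pm (\<lambda>i. \<Sum>v\<in>T0. (c \<circ> Pm) v * id v i)"
    proof -
      have "\<forall>(T :: (nat \<Rightarrow> 'a) set) c f. Pm (\<lambda>i. \<Sum>x\<in>T. c x * f x i) = (\<lambda>i. \<Sum>x\<in>T. c x * Pm (f x) i)"
        using lm unfolding linmap_def .
      from spec[OF spec[OF spec[OF this, of T0], of "c \<circ> Pm"], of id]
      show ?thesis by simp
    qed
    also have "(\<lambda>i. \<Sum>v\<in>T0. (c \<circ> Pm) v * id v i) \<in> \<Sigma>"
    proof -
      have H: "\<forall>T c. finite T \<and> T \<subseteq> \<Sigma> \<and> (\<forall>v\<in>T. c v \<in> Fqa) \<longrightarrow> (\<lambda>i. \<Sum>v\<in>T. c v * v i) \<in> \<Sigma>"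
        using subS unfolding subsp_def .
      have "\<forall>v\<in>T0. (c \<circ> Pm) v \<in> Fqa" using h T0(3) by auto
      hence "(\<lambda>i. \<Sum>v\<in>T0. (c \<circ> Pm) v * v i) \<in> \<Sigma>"
        using spec[OF spec[OF H, of T0], of "c \<circ> Pm"] T0 by blast
      thus ?thesis by simp
    qed
    hence "Pm (\<lambda>i. \<Sum>v\<in>T0. (c \<circ> Pm) v * id v i) \<in> V" unfolding V_def by (rule imageI)
    finally show "(\<lambda>i. \<Sum>v\<in>T. c v * v i) \<in> V" .
  qed
  have finV: "finite V" unfolding V_def using finSig by simp
  have cardV: "card V \<le> card Fqa ^ 4" unfolding V_def using card_image_le[OF finSig] cardSig
    by (meson le_trans)
  have key: "\<And>x. vec x \<in> \<Sigma> \<longleftrightarrow> vec (mob G x) \<in> V"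
  proof -
    fix x
    obtain l where l: "l \<in> Fqa" "l \<noteq> 0" "Pm (vec x) = (\<lambda>i. l * vec (mob G x) i)" using vP by blast
    show "vec x \<in> \<Sigma> \<longleftrightarrow> vec (mob G x) \<in> V"
    proof
      assume "vec x \<in> \<Sigma>"
      hence "Pm (vec x) \<in> V" unfolding V_def by simp
      moreover have "1 / l \<in> Fqa" using l(1) by simp
      ultimately have "(\<lambda>i. (1 / l) * Pm (vec x) i) \<in> V" by (rule subsp_scale[OF subV])
      moreover have "(\<lambda>i. (1 / l) * Pm (vec x) i) = vec (mob G x)" using l(2,3) by simp
      ultimately show "vec (mob G x) \<in> V" by simp
    next
      assume "vec (mob G x) \<in> V"
      hence "(\<lambda>i. l * vec (mob G x) i) \<in> V" using subsp_scale[OF subV] l(1) by simp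
      hence "Pm (vec x) \<in> Pm ` \<Sigma>" using l(3) unfolding V_def by simp
      then obtain \<sigma> where sg: "\<sigma> \<in> \<Sigma>" "Pm (vec x) = Pm \<sigma>" by blast
      have "vec x = \<sigma>" using inj_onD[OF injP sg(2) vec_U1] sg(1) SigU by blast
      thus "vec x \<in> \<Sigma>" using sg(1) by simp
    qed
  qed
  have dy: "distinct [mob G x1, mob G x2, mob G x3, mob G x4, mob G x5]"
    using dist mob_inj[OF dG] by auto
  obtain s where s: "mob G x4 = Some s" using dy PG(2) by (cases "mob G x4") auto
  obtain u where u: "mob G x5 = Some u" using dy PG(2) by (cases "mob G x5") auto
  have ne: "s \<noteq> 0" "s \<noteq> 1" "u \<noteq> 0" "u \<noteq> 1" "u \<noteq> s" using dy PG s u by auto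
  have mV: "vec None \<in> V" "vec (Some 0) \<in> V" "vec (Some 1) \<in> V" "vec (Some s) \<in> V" "vec (Some u) \<in> V"
    using key inS5 PG s u by metis+
  have KN: "\<And>y. vec y \<in> V \<longleftrightarrow> (y = None \<or> (\<exists>t. y = Some t \<and> F t = t))"
    by (rule keyN[OF subV finV cardV mV ne])
  obtain \<alpha> \<beta> \<gamma> \<delta> where H: "adj G = (\<alpha>, \<beta>, \<gamma>, \<delta>)" by (cases "adj G") blast
  have dH: "mdet (adj G) \<noteq> 0" using dG by (simp add: mdet_adj)
  define C where "C = {theta q (\<alpha> + \<beta> * t, \<gamma> + \<delta> * t) | t. t \<in> Fq q} \<union> {theta q (\<beta>, \<delta>)}"
  have th1: "\<And>t. theta q (\<alpha> + \<beta> * t, \<gamma> + \<delta> * t) = Pt (mob (adj G) (Some t))"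
    by (simp add: theta_eq mob_def H act_def rep_def)
  have th2: "theta q (\<beta>, \<delta>) = Pt (mob (adj G) None)"
    by (simp add: theta_eq mob_def H act_def rep_def)
  have CS: "C = {P \<in> O1 q. P \<subseteq> \<Sigma>}"
  proof (intro equalityI subsetI)
    fix P assume "P \<in> C"
    then obtain y where y: "P = Pt (mob (adj G) y)" "y = None \<or> (\<exists>t. y = Some t \<and> F t = t)"
      unfolding C_def th1 th2 Fq_iff by blast
    have "vec (mob G (mob (adj G) y)) \<in> V" using KN y(2) mob_adj2[OF dG] by simp
    hence "vec (mob (adj G) y) \<in> \<Sigma>" using key by blast
    hence "P \<subseteq> \<Sigma>" using memS y(1) by blast
    moreover have "P \<in> O1 q" using y(1) O1_eq by simp
    ultimately show "P \<in> {P \<in> O1 q. P \<subseteq> \<Sigma>}" by blast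
  next
    fix P assume "P \<in> {P \<in> O1 q. P \<subseteq> \<Sigma>}"
    hence P: "P \<in> O1 q" "P \<subseteq> \<Sigma>" by auto
    then obtain x where x: "P = Pt x" using O1_eq by auto
    have "vec (mob G x) \<in> V" using key memS P(2) x by blast
    hence my: "mob G x = None \<or> (\<exists>t. mob G x = Some t \<and> F t = t)" using KN by blast
    have xe: "x = mob (adj G) (mob G x)" using mob_adj[OF dG] by simp
    show "P \<in> C"
    proof (cases "mob G x")
      case None
      hence "P = theta q (\<beta>, \<delta>)" using x xe th2 by simp
      thus ?thesis unfolding C_def by blast
    next
      case (Some t)
      hence "F t = t" using my by simp
      hence "t \<in> Fq q" by (simp add: Fq_iff)
      moreover have "P = theta q (\<alpha> + \<beta> * t, \<gamma> + \<delta> * t)" using x xe th1 Some by simp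
      ultimately show ?thesis unfolding C_def by blast
    qed
  qed
  have XC: "X \<subseteq> C" using XO XS CS by blast
  have tc: "twisted_cubic_O1 q C"
    unfolding twisted_cubic_O1_def C_def
    using dH H by (intro exI[of _ \<alpha>] exI[of _ \<beta>] exI[of _ \<gamma>] exI[of _ \<delta>]) (simp add: mdet_def)
  show ?thesis using tc XC CS by blast
qed

end

theorem mainTheorem3:
  fixes q :: nat and \<Sigma> :: "(nat \<Rightarrow> 'a::{field,finite}) set"
    and X :: "((nat \<Rightarrow> 'a) set) set"
  assumes "\<exists>p k. prime p \<and> k > 0 \<and> q = p ^ k"
    and "card (UNIV :: 'a set) = q ^ 3"
    and "q \<ge> 4"
    and "is_solid q \<Sigma>"
    and "X \<subseteq> O1 q" and "card X = 5"
    and "\<forall>P\<in>X. P \<subseteq> \<Sigma>"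
  shows "\<exists>C. twisted_cubic_O1 q C \<and> X \<subseteq> C \<and> C = {P \<in> O1 q. P \<subseteq> \<Sigma>}"
proof -
  have ff: "FF TYPE('a) q"
    using frob_facts[OF assms(1) assms(2)] by (intro FF.intro) auto
  show ?thesis using FF.main_loc[OF ff assms(4) assms(5) assms(6) assms(7)] .
qed

end
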